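(* Let $n$ be a positive integer, $q=2^n$, $k$ an integer with $1\le k\le n-1$ and $k\notin\{n/3,2n/3\}$, $d=\gcd(n,k)$, $q_0=2^d$, $s=n/d$ odd. For $(\alpha,\beta)\in\mathbb{F}_q^2\setminus\{(0,0)\}$ let $r_{\alpha,\beta}$ be the $\mathbb{F}_{q_0}$-rank of the bilinear form $B_{\alpha,\beta}(x,y)=f_{\alpha,\beta}(x+y)-f_{\alpha,\beta}(x)-f_{\alpha,\beta}(y)$ where $f_{\alpha,\beta}(x)=\mathrm{Tr}_d^n(\alpha x^{2^{2k}+1}+\beta x^{2^k+1})$. Let $n_i$ be the number of $(\alpha,\beta)\neq(0,0)$ with $r_{\alpha,\beta}=s-i$. Then $n_1+n_3=2^{2n}-1$ and $$n_1=\frac{(2^n-1)(2^{n+2d}-2^n-2^{n-d}+2^{2d})}{2^{2d}-1},\qquad n_3=\frac{(2^{n-d}-1)(2^n-1)}{2^{2d}-1}.$$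
   Context: $\mathrm{Tr}_d^n:\mathbb{F}_{2^n}\to\mathbb{F}_{2^d}$ is the relative trace $x\mapsto\sum_{i=0}^{s-1}x^{2^{di}}$; $\mathbb{F}_q$ is regarded as an $s$-dimensional vector space over $\mathbb{F}_{q_0}$. *)

theory Defs
  imports Complex_Main
begin

text \<open>Finite field F_q with q = 2^n is modelled as a finite field type 'a with CARD('a) = 2^n.
The subfield F_{q0}, q0 = 2^d, is the set of fixed points of x \<mapsto> x^(2^d).\<close>

definition subfield_fix :: "nat \<Rightarrow> 'a::field set" where
  "subfield_fix d = {x. x ^ (2 ^ d) = x}"

definition rel_trace :: "nat \<Rightarrow> nat \<Rightarrow> 'a::field \<Rightarrow> 'a" where
  "rel_trace d s x = (\<Sum>i<s. x ^ (2 ^ (d * i)))"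

definition f_ab :: "nat \<Rightarrow> nat \<Rightarrow> nat \<Rightarrow> 'a::field \<Rightarrow> 'a \<Rightarrow> 'a \<Rightarrow> 'a" where
  "f_ab d s k \<alpha> \<beta> x = rel_trace d s (\<alpha> * x ^ (2 ^ (2 * k) + 1) + \<beta> * x ^ (2 ^ k + 1))"

definition B_ab :: "nat \<Rightarrow> nat \<Rightarrow> nat \<Rightarrow> 'a::field \<Rightarrow> 'a \<Rightarrow> 'a \<Rightarrow> 'a \<Rightarrow> 'a" where
  "B_ab d s k \<alpha> \<beta> x y = f_ab d s k \<alpha> \<beta> (x + y) - f_ab d s k \<alpha> \<beta> x - f_ab d s k \<alpha> \<beta> y"

definition radical_ab :: "nat \<Rightarrow> nat \<Rightarrow> nat \<Rightarrow> 'a::field \<Rightarrow> 'a \<Rightarrow> 'a set" where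
  "radical_ab d s k \<alpha> \<beta> = {x. \<forall>y. B_ab d s k \<alpha> \<beta> x y = 0}"

definition fdim :: "'a set \<Rightarrow> 'a set \<Rightarrow> nat" where
  "fdim K W = (THE m. card W = card K ^ m)"

definition rank_ab :: "nat \<Rightarrow> nat \<Rightarrow> nat \<Rightarrow> 'a::field \<Rightarrow> 'a \<Rightarrow> nat" where
  "rank_ab d s k \<alpha> \<beta> = s - fdim (subfield_fix d :: 'a set) (radical_ab d s k \<alpha> \<beta>)"

end

theory Submission
  imports Defs "HOL-Computational_Algebra.Polynomial" "HOL-Library.Product_Plus"
begin

section \<open>Characteristic 2\<close>

lemma c2_add_self: assumes two: "(2::'a::field) = 0" shows "(x::'a) + x = 0"
proof -
  have "x + x = 2 * x" by simp
  thus ?thesis using two by simp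
qed

lemma c2_minus: assumes two: "(2::'a::field) = 0" shows "- (x::'a) = x"
  using c2_add_self[OF two, of x] by (simp add: add_eq_0_iff2 eq_neg_iff_add_eq_0)

lemma c2_diff: assumes two: "(2::'a::field) = 0" shows "(x::'a) - y = x + y"
  using c2_minus[OF two, of y] by (metis diff_conv_add_uminus)

lemma c2_sq_add: assumes two: "(2::'a::field) = 0" shows "((x::'a) + y) ^ 2 = x^2 + y^2"
proof -
  have "(x+y)^2 = x^2 + y^2 + 2*x*y" by (simp add: power2_eq_square algebra_simps)
  thus ?thesis using two by simp
qed

lemma c2_pow_add: assumes two: "(2::'a::field) = 0" shows "((x::'a) + y) ^ (2^j) = x^(2^j) + y^(2^j)"
proof (induction j)
  case 0 then show ?case by simp
next
  case (Suc j)
  have "(x+y)^(2^Suc j) = ((x+y)^(2^j))^2" by (simp add: power_mult[symmetric] mult.commute)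
  also have "\<dots> = (x^(2^j))^2 + (y^(2^j))^2" using Suc c2_sq_add[OF two] by simp
  also have "\<dots> = x^(2^Suc j) + y^(2^Suc j)" by (simp add: power_mult[symmetric] mult.commute)
  finally show ?case .
qed

lemma c2_pow_sum: assumes two: "(2::'a::field) = 0"
  shows "(\<Sum>i\<in>A. (f i::'a)) ^ (2^j) = (\<Sum>i\<in>A. f i ^ (2^j))"
proof (induction A rule: infinite_finite_induct)
  case (insert x F) then show ?case by (simp add: c2_pow_add[OF two])
qed auto

lemma c2_pow_diff: assumes two: "(2::'a::field) = 0" shows "((x::'a) - y) ^ (2^j) = x^(2^j) - y^(2^j)"
  unfolding c2_diff[OF two] by (rule c2_pow_add[OF two])

lemma pow2_comp: "((x::'a::monoid_mult) ^ (2^a)) ^ (2^b) = x ^ (2^(a+b))"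
  by (simp add: power_mult[symmetric] power_add)

section \<open>Finite fields\<close>

lemma card_char2:
  assumes "card (UNIV :: 'a::{finite,field} set) = 2 ^ n" "0 < n"
  shows "(2::'a) = 0"
proof -
  have "\<And>x::'a. of_nat (card (UNIV::'a set)) * x = 0"
  proof -
    fix x :: 'a
    have "bij_betw (\<lambda>y. x + y) UNIV UNIV"
      by (rule bij_betw_byWitness[where f'="\<lambda>y. y - x"]) auto
    hence "(\<Sum>y\<in>UNIV. x + y) = (\<Sum>y\<in>UNIV. y)"
      by (rule sum.reindex_bij_betw)
    hence "of_nat (card (UNIV::'a set)) * x + (\<Sum>y\<in>UNIV. y) = (\<Sum>y\<in>UNIV. y)"
      by (simp add: sum.distrib)
    thus "of_nat (card (UNIV::'a set)) * x = 0" by simp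
  qed
  from this[of 1] assms have "(2::'a)^n = 0" by simp
  thus ?thesis by simp
qed

lemma fin_field_pow_card:
  fixes x :: "'a::{finite,field}"
  shows "x ^ card (UNIV :: 'a set) = x"
proof (cases "x = 0")
  case True
  have "card (UNIV::'a set) > 0" by (simp add: finite_UNIV_card_ge_0)
  then show ?thesis using True by (simp add: zero_power)
next
  case False
  let ?S = "UNIV - {0::'a}"
  have "bij_betw (\<lambda>y. x * y) ?S ?S"
    by (rule bij_betw_byWitness[where f'="\<lambda>y. y / x"]) (use False in auto)
  hence "(\<Prod>y\<in>?S. x * y) = (\<Prod>y\<in>?S. y)" by (rule prod.reindex_bij_betw)
  hence "x ^ card ?S * (\<Prod>y\<in>?S. y) = (\<Prod>y\<in>?S. y)" by (simp add: prod.distrib)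
  moreover have "(\<Prod>y\<in>?S. y) \<noteq> 0" by simp
  ultimately have "x ^ card ?S = 1" by simp
  moreover have "card ?S = card (UNIV::'a set) - 1" by (simp add: card_Diff_singleton)
  moreover have "card (UNIV::'a set) > 0" by (simp add: finite_UNIV_card_ge_0)
  ultimately show ?thesis
    by (metis One_nat_def Suc_pred mult.commute mult_1 power_Suc)
qed

lemma fin_field_pow_mult:
  fixes x :: "'a::{finite,field}"
  assumes "card (UNIV :: 'a set) = 2 ^ n"
  shows "x ^ (2 ^ (n * t)) = x"
proof (induction t)
  case 0 then show ?case by simp
next
  case (Suc t)
  have "x ^ (2 ^ (n * Suc t)) = (x ^ (2 ^ (n*t))) ^ (2^n)"
    by (simp add: pow2_comp add.commute)
  also have "\<dots> = x" using Suc fin_field_pow_card[of x] assms by simp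
  finally show ?case .
qed

lemma additive_zero: fixes g :: "'c::ab_group_add \<Rightarrow> 'b::ab_group_add" assumes "\<And>a b. g (a + b) = g a + g b" shows "g 0 = (0::'b::ab_group_add)"
proof -
  have "g 0 + g 0 = g 0 + 0" using assms[of 0 0] by simp
  thus ?thesis by (simp only: add_left_cancel)
qed

lemma additive_diff: fixes g :: "'c::ab_group_add \<Rightarrow> 'b::ab_group_add"
  assumes "\<And>a b. g (a + b) = g a + g b" shows "g (a - b) = g a - g b"
proof -
  have "g a = g (a - b) + g b" using assms[of "a - b" b] by simp
  thus ?thesis by (simp add: eq_diff_eq)
qed

lemma fiber_card:
  fixes g :: "'c::{finite,ab_group_add} \<Rightarrow> 'b::ab_group_add"
  assumes add: "\<And>a b. g (a + b) = g a + g b"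
  shows "card (g -` {g x0}) = card {x. g x = 0}"
proof -
  have "g -` {g x0} = (\<lambda>t. x0 + t) ` {x. g x = 0}"
  proof (intro equalityI subsetI)
    fix y assume "y \<in> g -` {g x0}"
    hence "g (y - x0) = 0" using additive_diff[OF add] by simp
    thus "y \<in> (\<lambda>t. x0 + t) ` {x. g x = 0}" by (auto intro!: image_eqI[where x="y - x0"])
  next
    fix y assume "y \<in> (\<lambda>t. x0 + t) ` {x. g x = 0}"
    then obtain t where "g t = 0" "y = x0 + t" by auto
    thus "y \<in> g -` {g x0}" using add by simp
  qed
  moreover have "inj (\<lambda>t. x0 + (t::'c))" by (auto simp: inj_on_def)
  ultimately show ?thesis by (simp add: card_image inj_on_subset)
qed

lemma hom_card:
  fixes g :: "'c::{finite,ab_group_add} \<Rightarrow> 'b::ab_group_add"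
  assumes add: "\<And>a b. g (a + b) = g a + g b"
  shows "card (UNIV::'c set) = card {x. g x = 0} * card (range g)"
proof -
  have U: "UNIV = (\<Union>v\<in>range g. g -` {v})" by auto
  have "card (\<Union>v\<in>range g. g -` {v}) = (\<Sum>v\<in>range g. card (g -` {v}))"
    by (rule card_UN_disjoint) auto
  also have "\<dots> = (\<Sum>v\<in>range g. card {x. g x = 0})"
  proof (rule sum.cong[OF refl])
    fix v assume "v \<in> range g"
    then obtain x0 where v: "v = g x0" by auto
    show "card (g -` {v}) = card {x. g x = 0}" unfolding v by (rule fiber_card[OF add])
  qed
  also have "\<dots> = card {x. g x = 0} * card (range g)" by simp
  finally show ?thesis by (simp only: U[symmetric])
qed

lemma preimage_card:
  fixes g :: "'c::{finite,ab_group_add} \<Rightarrow> 'b::ab_group_add"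
  assumes add: "\<And>a b. g (a + b) = g a + g b" and fS: "finite S"
  shows "card {y. g y \<in> S} \<le> card S * card {x. g x = 0}"
proof -
  have "{y. g y \<in> S} = (\<Union>v\<in>S \<inter> range g. g -` {v})" by auto
  hence "card {y. g y \<in> S} \<le> (\<Sum>v\<in>S \<inter> range g. card (g -` {v}))"
    using card_UN_le[of "S \<inter> range g" "\<lambda>v. g -` {v}"] by simp
  also have "\<dots> = (\<Sum>v\<in>S \<inter> range g. card {x. g x = 0})"
  proof (rule sum.cong[OF refl])
    fix v assume "v \<in> S \<inter> range g"
    then obtain x0 where v: "v = g x0" by auto
    show "card (g -` {v}) = card {x. g x = 0}" unfolding v by (rule fiber_card[OF add])
  qed
  also have "\<dots> = card (S \<inter> range g) * card {x. g x = 0}" by simp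
  also have "\<dots> \<le> card S * card {x. g x = 0}"
  proof -
    have "card (S \<inter> range g) \<le> card S" by (rule card_mono[OF fS]) blast
    thus ?thesis by (rule mult_right_mono) simp
  qed
  finally show ?thesis .
qed

lemma tele_identity:
  fixes b :: "nat \<Rightarrow> 'a::field"
  assumes two: "(2::'a) = 0"
  shows "(\<Sum>i\<le>M. b i * (y^(2^(j*i)) - y)) = (\<Sum>l<M. (\<Sum>i\<in>{l<..M}. b i) * (y^(2^j) - y)^(2^(j*l)))"
proof (induction M)
  case 0 then show ?case by simp
next
  case (Suc M)
  define z where "z l = (y^(2^j) - y)^(2^(j*l))" for l
  have z: "z l = y^(2^(j*Suc l)) - y^(2^(j*l))" for l
    unfolding z_def c2_pow_diff[OF two] pow2_comp by (simp add: add.commute)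
  have tel: "(\<Sum>l<Suc M. z l) = y^(2^(j*Suc M)) - y"
    unfolding z using sum_lessThan_telescope[of "\<lambda>l. y^(2^(j*l))" "Suc M"] by simp
  have ins: "l < Suc M \<Longrightarrow> (\<Sum>i\<in>{l<..Suc M}. b i) = b (Suc M) + (\<Sum>i\<in>{l<..M}. b i)" for l
  proof -
    assume "l < Suc M"
    hence "{l<..Suc M} = insert (Suc M) {l<..M}" by auto
    thus ?thesis by simp
  qed
  have "(\<Sum>l<Suc M. (\<Sum>i\<in>{l<..Suc M}. b i) * z l)
      = (\<Sum>l<Suc M. b (Suc M) * z l + (\<Sum>i\<in>{l<..M}. b i) * z l)"
    by (rule sum.cong[OF refl]) (simp add: ins distrib_right)
  also have "\<dots> = b (Suc M) * (\<Sum>l<Suc M. z l) + (\<Sum>l<Suc M. (\<Sum>i\<in>{l<..M}. b i) * z l)"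
    by (simp add: sum.distrib sum_distrib_left distrib_left)
  also have "(\<Sum>l<Suc M. (\<Sum>i\<in>{l<..M}. b i) * z l) = (\<Sum>l<M. (\<Sum>i\<in>{l<..M}. b i) * z l)"
    by simp
  finally have R: "(\<Sum>l<Suc M. (\<Sum>i\<in>{l<..Suc M}. b i) * z l)
      = b (Suc M) * (y^(2^(j*Suc M)) - y) + (\<Sum>l<M. (\<Sum>i\<in>{l<..M}. b i) * z l)"
    unfolding tel .
  show ?case using Suc R unfolding z_def by (simp add: add.commute)
qed

lemma sigma_bound:
  fixes a :: "nat \<Rightarrow> 'a::{finite,field}"
  assumes two: "(2::'a) = 0" and am: "a m \<noteq> 0"
  shows "card {x. (\<Sum>i\<le>m. a i * x^(2^(j*i))) = 0} \<le> card {x::'a. x^(2^j) = x} ^ m"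
  using am
proof (induction m arbitrary: a)
  case 0
  hence "{x. (\<Sum>i\<le>0. a i * x^(2^(j*i))) = 0} = {0::'a}" by auto
  then show ?case by simp
next
  case (Suc m a)
  let ?L = "\<lambda>x. (\<Sum>i\<le>Suc m. a i * x^(2^(j*i)))"
  let ?K = "{x. ?L x = 0}"
  let ?F = "{x::'a. x^(2^j) = x}"
  have Q1: "1 \<le> card ?F"
  proof -
    have "0 \<in> ?F" by simp
    hence "?F \<noteq> {}" by blast
    thus ?thesis by (simp add: Suc_leI card_gt_0_iff)
  qed
  show ?case
  proof (cases "?K \<subseteq> {0}")
    case True
    hence "card ?K \<le> card {0::'a}" by (intro card_mono) auto
    also have "\<dots> \<le> card ?F ^ Suc m" using Q1 by simp
    finally show ?thesis .
  next
    case False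
    then obtain u where u: "?L u = 0" "u \<noteq> 0" by auto
    define b where "b i = a i * u^(2^(j*i))" for i
    define c where "c l = (\<Sum>i\<in>{l<..Suc m}. b i)" for l
    have "{m<..Suc m} = {Suc m}" by auto
    hence cm: "c m \<noteq> 0" using Suc.prems u(2) by (simp add: c_def b_def)
    define N where "N z = (\<Sum>l\<le>m. c l * z^(2^(j*l)))" for z
    have IH: "card {z. N z = 0} \<le> card ?F ^ m" unfolding N_def by (rule Suc.IH[of c, OF cm])
    define g where "g y = y^(2^j) - y" for y :: 'a
    have gadd: "g (x + y) = g x + g y" for x y
      unfolding g_def c2_pow_add[OF two] by simp
    have gker: "{y. g y = 0} = ?F" unfolding g_def by auto
    have sb: "(\<Sum>i\<le>Suc m. b i) = 0" using u(1) by (simp add: b_def)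
    have KS: "?K \<subseteq> (\<lambda>y. u * y) ` {y. g y \<in> {z. N z = 0}}"
    proof
      fix x assume "x \<in> ?K"
      hence Lx: "?L x = 0" by simp
      define y where "y = x / u"
      have xy: "x = u * y" using u(2) by (simp add: y_def)
      have "?L x = (\<Sum>i\<le>Suc m. b i * y^(2^(j*i)))"
        unfolding xy b_def by (simp add: power_mult_distrib mult.assoc)
      also have "\<dots> = (\<Sum>i\<le>Suc m. b i * (y^(2^(j*i)) - y)) + (\<Sum>i\<le>Suc m. b i) * y"
      proof -
        have "(\<Sum>i\<le>Suc m. b i * (y^(2^(j*i)) - y)) = (\<Sum>i\<le>Suc m. b i * y^(2^(j*i))) - (\<Sum>i\<le>Suc m. b i) * y"
          by (simp only: right_diff_distrib sum_subtractf sum_distrib_right)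
        thus ?thesis by (simp only: diff_add_cancel)
      qed
      also have "\<dots> = (\<Sum>i\<le>Suc m. b i * (y^(2^(j*i)) - y))" using sb by simp
      also have "\<dots> = (\<Sum>l<Suc m. c l * (g y)^(2^(j*l)))"
        unfolding tele_identity[OF two] c_def g_def ..
      also have "\<dots> = N (g y)" unfolding N_def by (simp add: lessThan_Suc_atMost)
      finally have "N (g y) = 0" using Lx by simp
      thus "x \<in> (\<lambda>y. u * y) ` {y. g y \<in> {z. N z = 0}}" using xy by blast
    qed
    have "card ?K \<le> card ((\<lambda>y. u * y) ` {y. g y \<in> {z. N z = 0}})"
      by (rule card_mono[OF _ KS]) simp
    also have "\<dots> \<le> card {y. g y \<in> {z. N z = 0}}" by (rule card_image_le) simp
    also have "\<dots> \<le> card {z. N z = 0} * card {y. g y = 0}"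
      by (rule preimage_card[OF gadd]) simp
    also have "\<dots> \<le> card ?F ^ m * card ?F" unfolding gker using IH by simp
    finally show ?thesis by (simp add: mult.commute)
  qed
qed

definition subfield_set :: "'a::field set \<Rightarrow> bool" where
  "subfield_set F \<longleftrightarrow> 0 \<in> F \<and> 1 \<in> F \<and> (\<forall>a\<in>F. \<forall>b\<in>F. a + b \<in> F \<and> a * b \<in> F \<and> - a \<in> F \<and> inverse a \<in> F)"

definition fsubspace :: "'a::field set \<Rightarrow> 'a set \<Rightarrow> bool" where
  "fsubspace F V \<longleftrightarrow> 0 \<in> V \<and> (\<forall>x\<in>V. \<forall>y\<in>V. x + y \<in> V) \<and> (\<forall>c\<in>F. \<forall>x\<in>V. c * x \<in> V)"

lemma fsub_neg: "subfield_set F \<Longrightarrow> fsubspace F V \<Longrightarrow> x \<in> V \<Longrightarrow> - x \<in> V"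
  unfolding subfield_set_def fsubspace_def by (metis mult_minus1)

lemma fsub_diff: "subfield_set F \<Longrightarrow> fsubspace F V \<Longrightarrow> x \<in> V \<Longrightarrow> y \<in> V \<Longrightarrow> x - y \<in> V"
  using fsub_neg[of F V y] unfolding fsubspace_def by (metis diff_conv_add_uminus)

lemma sf_diff: "subfield_set F \<Longrightarrow> a \<in> F \<Longrightarrow> b \<in> F \<Longrightarrow> a - b \<in> F"
  unfolding subfield_set_def by (metis diff_conv_add_uminus)

lemma space_card_pow_aux:
  fixes V :: "'a::{finite,field} set"
  assumes sf: "subfield_set F" and V: "fsubspace F V"
  shows "fsubspace F W \<Longrightarrow> W \<subseteq> V \<Longrightarrow> card W = card F ^ j \<Longrightarrow> \<exists>m. card V = card F ^ m"
proof (induction "card V - card W" arbitrary: W j rule: less_induct)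
  case less
  show ?case
  proof (cases "W = V")
    case True then show ?thesis using less.prems by blast
  next
    case False
    then obtain v where v: "v \<in> V" "v \<notin> W" using less.prems(2) by blast
    define W' where "W' = (\<lambda>(w, c). w + c * v) ` (W \<times> F)"
    have FW: "\<And>w. w \<in> W \<Longrightarrow> w \<in> V" using less.prems(2) by blast
    have W'sub: "fsubspace F W'"
      unfolding fsubspace_def
    proof (intro conjI ballI)
      show "0 \<in> W'" unfolding W'_def using less.prems(1) sf
        by (auto simp: fsubspace_def subfield_set_def intro!: image_eqI[where x="(0,0)"])
    next
      fix x y assume "x \<in> W'" "y \<in> W'"
      then obtain w c w' c' where "w \<in> W" "c \<in> F" "w' \<in> W" "c' \<in> F" "x = w + c * v" "y = w' + c' * v"
        unfolding W'_def by auto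
      moreover have "x + y = (w + w') + (c + c') * v" using calculation by (simp add: algebra_simps)
      ultimately show "x + y \<in> W'" unfolding W'_def using less.prems(1) sf
        by (auto simp: fsubspace_def subfield_set_def intro!: image_eqI[where x="(w + w', c + c')"])
    next
      fix d x assume "d \<in> F" "x \<in> W'"
      then obtain w c where "w \<in> W" "c \<in> F" "x = w + c * v" unfolding W'_def by auto
      moreover have "d * x = d * w + (d * c) * v" using calculation by (simp add: algebra_simps)
      ultimately show "d * x \<in> W'" unfolding W'_def using less.prems(1) sf \<open>d \<in> F\<close>
        by (auto simp: fsubspace_def subfield_set_def intro!: image_eqI[where x="(d * w, d * c)"])
    qed
    have W'V: "W' \<subseteq> V"
    proof
      fix x assume "x \<in> W'"
      then obtain w c where "w \<in> W" "c \<in> F" "x = w + c * v" unfolding W'_def by auto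
      thus "x \<in> V" using V v FW unfolding fsubspace_def by auto
    qed
    have inj: "inj_on (\<lambda>(w, c). w + c * v) (W \<times> F)"
    proof (rule inj_onI, clarify)
      fix w c w' c' assume h: "w \<in> W" "c \<in> F" "w' \<in> W" "c' \<in> F" "w + c * v = w' + c' * v"
      show "w = w' \<and> c = c'"
      proof (cases "c = c'")
        case True then show ?thesis using h by simp
      next
        case False
        have "(c - c') * v = w' - w" using h(5) by (simp add: algebra_simps)
        hence "v = inverse (c - c') * (w' - w)" using False by (simp add: field_simps)
        moreover have "inverse (c - c') \<in> F" using sf sf_diff[OF sf h(2,4)] unfolding subfield_set_def by blast
        moreover have "w' - w \<in> W" using fsub_diff[OF sf less.prems(1) h(3,1)] .
        ultimately have "v \<in> W" using less.prems(1) unfolding fsubspace_def by auto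
        thus ?thesis using v by blast
      qed
    qed
    have cW': "card W' = card F ^ Suc j"
      unfolding W'_def card_image[OF inj] card_cartesian_product using less.prems(3) by simp
    have "W \<subseteq> W'"
    proof
      fix w assume "w \<in> W"
      moreover have "0 \<in> F" using sf unfolding subfield_set_def by blast
      ultimately show "w \<in> W'" unfolding W'_def by (auto intro!: image_eqI[where x="(w, 0)"])
    qed
    moreover have "v \<in> W'"
    proof -
      have "0 \<in> W" "1 \<in> F" using less.prems(1) sf unfolding fsubspace_def subfield_set_def by auto
      thus ?thesis unfolding W'_def by (auto intro!: image_eqI[where x="(0, 1)"])
    qed
    ultimately have "W \<subset> W'" using v by blast
    hence "card W < card W'" by (simp add: psubset_card_mono)
    moreover have "card W' \<le> card V" using W'V by (simp add: card_mono)
    ultimately have "card V - card W' < card V - card W" by simp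
    thus ?thesis using less.hyps[OF _ W'sub W'V cW'] by blast
  qed
qed

lemma space_card_pow:
  fixes V :: "'a::{finite,field} set"
  assumes sf: "subfield_set F" and V: "fsubspace F V"
  shows "\<exists>m. card V = card F ^ m"
proof -
  have "fsubspace F {0}" using sf unfolding fsubspace_def by simp
  moreover have "{0} \<subseteq> V" using V unfolding fsubspace_def by simp
  moreover have "card {0::'a} = card F ^ 0" by simp
  ultimately show ?thesis using space_card_pow_aux[OF sf V] by blast
qed

lemma alt_parity:
  fixes B :: "'a::{finite,field} \<Rightarrow> 'a \<Rightarrow> 'a"
  assumes sf: "subfield_set F"
    and sym: "\<And>x y. B x y = B y x" and alt: "\<And>x. B x x = 0"
    and add: "\<And>x y z. B x (y + z) = B x y + B x z"
    and scal: "\<And>x y c. c \<in> F \<Longrightarrow> B x (c * y) = c * B x y"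
    and inF: "\<And>x y. B x y \<in> F"
  shows "fsubspace F V \<Longrightarrow> \<exists>t. card V = card {x\<in>V. \<forall>y\<in>V. B x y = 0} * card F ^ (2*t)"
proof (induction "card V" arbitrary: V rule: less_induct)
  case less
  have B0: "B x 0 = 0" for x
  proof -
    have "B x 0 + B x 0 = B x 0 + 0" using add[of x 0 0] by simp
    thus ?thesis by (simp only: add_left_cancel)
  qed
  have Bneg: "B x (- y) = - B x y" for x y using add[of x y "- y"] B0 by (simp add: eq_neg_iff_add_eq_0 add.commute)
  have Bdiff: "B x (y - z) = B x y - B x z" for x y z using add[of x y "- z"] Bneg by simp
  have lin: "a \<in> F \<Longrightarrow> b \<in> F \<Longrightarrow> B x (y + a * u + b * v) = B x y + a * B x u + b * B x v" for x y a b u v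
    using add scal by simp
  have lin2: "a \<in> F \<Longrightarrow> b \<in> F \<Longrightarrow> B x (y - a * u - b * v) = B x y - a * B x u - b * B x v" for x y a b u v
    using Bdiff scal by simp
  have sfF: "0 \<in> F" "1 \<in> F" "\<And>a b. a \<in> F \<Longrightarrow> b \<in> F \<Longrightarrow> a + b \<in> F"
    "\<And>a b. a \<in> F \<Longrightarrow> b \<in> F \<Longrightarrow> a * b \<in> F" "\<And>a. a \<in> F \<Longrightarrow> inverse a \<in> F"
    using sf unfolding subfield_set_def by auto
  have Vc: "0 \<in> V" "\<And>x y. x \<in> V \<Longrightarrow> y \<in> V \<Longrightarrow> x + y \<in> V" "\<And>c x. c \<in> F \<Longrightarrow> x \<in> V \<Longrightarrow> c * x \<in> V"
    using less.prems unfolding fsubspace_def by auto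
  have Vd: "\<And>x y. x \<in> V \<Longrightarrow> y \<in> V \<Longrightarrow> x - y \<in> V" using fsub_diff[OF sf less.prems] by blast
  let ?R = "\<lambda>V. {x\<in>V. \<forall>y\<in>V. B x y = 0}"
  show ?case
  proof (cases "?R V = V")
    case True
    then show ?thesis by (intro exI[of _ 0]) simp
  next
    case False
    then obtain e f0 where e: "e \<in> V" "f0 \<in> V" "B e f0 \<noteq> 0" by blast
    define f where "f = inverse (B e f0) * f0"
    have fV: "f \<in> V" unfolding f_def using Vc(3)[OF sfF(5)[OF inF] e(2)] .
    have ef: "B e f = 1" unfolding f_def using scal[OF sfF(5)[OF inF]] e(3) by simp
    have fe: "B f e = 1" using ef sym by simp
    define W where "W = {x\<in>V. B x e = 0 \<and> B x f = 0}"
    have Wsub: "fsubspace F W" unfolding fsubspace_def W_def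
    proof (intro conjI ballI)
      show "0 \<in> {x \<in> V. B x e = 0 \<and> B x f = 0}" using Vc(1) B0[of e] B0[of f] sym[of 0 e] sym[of 0 f] by simp
    next
      fix x y assume "x \<in> {x \<in> V. B x e = 0 \<and> B x f = 0}" "y \<in> {x \<in> V. B x e = 0 \<and> B x f = 0}"
      hence "x \<in> V" "y \<in> V" "B e x = 0" "B f x = 0" "B e y = 0" "B f y = 0"
        using sym[of x e] sym[of x f] sym[of y e] sym[of y f] by auto
      moreover have "B (x + y) e = B e x + B e y" using sym[of "x+y" e] add[of e x y] by simp
      moreover have "B (x + y) f = B f x + B f y" using sym[of "x+y" f] add[of f x y] by simp
      ultimately show "x + y \<in> {x \<in> V. B x e = 0 \<and> B x f = 0}" using Vc(2) by simp
    next
      fix c x assume "c \<in> F" "x \<in> {x \<in> V. B x e = 0 \<and> B x f = 0}"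
      hence "x \<in> V" "B e x = 0" "B f x = 0"
        using sym[of x e] sym[of x f] by auto
      moreover have "B (c * x) e = c * B e x" using sym[of "c*x" e] scal[OF \<open>c \<in> F\<close>, of e x] by simp
      moreover have "B (c * x) f = c * B f x" using sym[of "c*x" f] scal[OF \<open>c \<in> F\<close>, of f x] by simp
      ultimately show "c * x \<in> {x \<in> V. B x e = 0 \<and> B x f = 0}" using Vc(3)[OF \<open>c \<in> F\<close>] by simp
    qed
    have WV: "W \<subseteq> V" unfolding W_def by blast
    have "e \<notin> W" unfolding W_def using ef by simp
    hence "W \<subset> V" using WV e(1) by blast
    hence cWV: "card W < card V" by (simp add: psubset_card_mono)
    have RW: "?R W = ?R V"
    proof (intro equalityI subsetI)
      fix x assume "x \<in> ?R V"
      thus "x \<in> ?R W" using e(1) fV WV unfolding W_def by auto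
    next
      fix x assume xW: "x \<in> ?R W"
      hence xV: "x \<in> V" and xe: "B x e = 0" and xf: "B x f = 0" using WV unfolding W_def by auto
      have "B x y = 0" if yV: "y \<in> V" for y
      proof -
        define w where "w = y - B y f * e - B e y * f"
        have wV: "w \<in> V" unfolding w_def by (intro Vd Vc(3)[OF inF] yV e(1) fV)
        have "B e w = B e y - B y f * B e e - B e y * B e f" unfolding w_def by (rule lin2[OF inF inF])
        hence we: "B w e = 0" using alt ef sym by simp
        have "B f w = B f y - B y f * B f e - B e y * B f f" unfolding w_def by (rule lin2[OF inF inF])
        hence wf: "B w f = 0" using alt fe sym by simp
        have "w \<in> W" unfolding W_def using wV we wf by simp
        hence "B x w = 0" using xW by blast
        have "y = w + B y f * e + B e y * f" unfolding w_def by simp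
        hence "B x y = B x w + B y f * B x e + B e y * B x f" using lin[OF inF inF] by metis
        thus ?thesis using \<open>B x w = 0\<close> xe xf by simp
      qed
      thus "x \<in> ?R V" using xV by blast
    qed
    define h where "h = (\<lambda>(w, a, b). w + a * e + b * f)"
    have bij: "bij_betw h (W \<times> (F \<times> F)) V"
      unfolding bij_betw_def
    proof
      show "inj_on h (W \<times> F \<times> F)"
      proof (rule inj_onI)
        fix p q assume p: "p \<in> W \<times> F \<times> F" and q: "q \<in> W \<times> F \<times> F" and eq0: "h p = h q"
        obtain w a b where pw: "p = (w, a, b)" by (cases p) auto
        obtain w' a' b' where qw: "q = (w', a', b')" by (cases q) auto
        have h: "w \<in> W" "a \<in> F" "b \<in> F" "w' \<in> W" "a' \<in> F" "b' \<in> F" using p q pw qw by auto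
        have eq: "h (w, a, b) = h (w', a', b')" using eq0 pw qw by simp
        have we: "B e w = 0" "B e w' = 0" "B f w = 0" "B f w' = 0" using h(1,4) sym unfolding W_def by auto
        have "B e (h (w, a, b)) = b" unfolding h_def using lin[OF h(2,3)] we alt ef by simp
        moreover have "B e (h (w', a', b')) = b'" unfolding h_def using lin[OF h(5,6)] we alt ef by simp
        ultimately have bb: "b = b'" using eq by simp
        have "B f (h (w, a, b)) = a" unfolding h_def using lin[OF h(2,3)] we alt fe by simp
        moreover have "B f (h (w', a', b')) = a'" unfolding h_def using lin[OF h(5,6)] we alt fe by simp
        ultimately have aa: "a = a'" using eq by simp
        show "p = q" using eq aa bb pw qw unfolding h_def by simp
      qed
    next
      show "h ` (W \<times> F \<times> F) = V"
      proof (intro equalityI subsetI)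
        fix y assume "y \<in> h ` (W \<times> F \<times> F)"
        then obtain w a b where "w \<in> W" "a \<in> F" "b \<in> F" "y = w + a * e + b * f" unfolding h_def by auto
        moreover have "w \<in> V" using calculation(1) WV by blast
        moreover have "a * e \<in> V" by (rule Vc(3)[OF calculation(2) e(1)])
        moreover have "b * f \<in> V" by (rule Vc(3)[OF calculation(3) fV])
        ultimately show "y \<in> V" using Vc(2) by simp
      next
        fix y assume yV: "y \<in> V"
        define w where "w = y - B y f * e - B e y * f"
        have wV: "w \<in> V" unfolding w_def by (intro Vd Vc(3)[OF inF] yV e(1) fV)
        have "B e w = B e y - B y f * B e e - B e y * B e f" unfolding w_def by (rule lin2[OF inF inF])
        hence we: "B w e = 0" using alt ef sym by simp
        have "B f w = B f y - B y f * B f e - B e y * B f f" unfolding w_def by (rule lin2[OF inF inF])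
        hence wf: "B w f = 0" using alt fe sym by simp
        have "w \<in> W" unfolding W_def using wV we wf by simp
        moreover have "y = h (w, B y f, B e y)" unfolding w_def h_def by simp
        ultimately show "y \<in> h ` (W \<times> F \<times> F)" using inF by blast
      qed
    qed
    have cV: "card V = card W * (card F * card F)"
      using bij_betw_same_card[OF bij] by (simp add: card_cartesian_product)
    obtain t where "card W = card (?R W) * card F ^ (2 * t)" using less.hyps[OF cWV Wsub] by blast
    hence "card V = card (?R V) * card F ^ (2 * Suc t)" using cV RW by (simp add: power_add power_mult_distrib)
    thus ?thesis by blast
  qed
qed

locale ffield =
  fixes n k d s :: nat and dummy :: "'a::{finite,field}"
  assumes cardU: "card (UNIV :: 'a set) = 2 ^ n"
    and npos: "0 < n" and k1: "1 \<le> k" and kn: "k < n"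
    and d_def: "d = gcd n k" and s_def: "s = n div d"
begin

lemma two: "(2::'a) = 0" using card_char2[OF cardU npos] .

lemma dpos: "0 < d" using d_def npos by simp
lemma ddvdn: "d dvd n" using d_def by simp
lemma ddvdk: "d dvd k" using d_def by simp
lemma nds: "n = d * s" using s_def ddvdn by simp
lemma spos: "0 < s" using nds npos by (cases s) auto

lemma frob: "(x::'a) ^ (2 ^ (n * t)) = x" using fin_field_pow_mult[OF cardU] .

abbreviation F :: "'a set" where "F \<equiv> subfield_fix d"

lemma F_iff: "x \<in> F \<longleftrightarrow> x ^ (2^d) = x" unfolding subfield_fix_def by simp

lemma F_pow_mult: "x \<in> F \<Longrightarrow> x ^ (2 ^ (d * t)) = x"
proof (induction t)
  case 0 then show ?case by simp
next
  case (Suc t)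
  have "x ^ (2 ^ (d * Suc t)) = (x ^ (2 ^ (d * t))) ^ (2 ^ d)" by (simp add: pow2_comp add.commute)
  then show ?case using Suc F_iff by simp
qed

lemma F_pow_dvd: "x \<in> F \<Longrightarrow> d dvd j \<Longrightarrow> x ^ (2 ^ j) = x"
  using F_pow_mult by (auto elim!: dvdE)

lemma subfield_F: "subfield_set F"
  unfolding subfield_set_def subfield_fix_def
  by (simp add: c2_pow_add[OF two] power_mult_distrib power_inverse c2_minus[OF two])

lemma Fix_k: "{x::'a. x ^ (2^k) = x} = F"
proof (intro equalityI subsetI)
  fix x :: 'a assume "x \<in> {x. x ^ (2^k) = x}"
  hence xk: "x ^ (2^k) = x" by simp
  have kx: "x ^ (2 ^ (k * t)) = x" for t
  proof (induction t)
    case (Suc t)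
    have "x ^ (2 ^ (k * Suc t)) = (x ^ (2 ^ (k * t))) ^ (2 ^ k)" by (simp add: pow2_comp add.commute)
    then show ?case using Suc xk by simp
  qed simp
  obtain X Y where XY: "k * X = n * Y + gcd k n" using bezout_nat[of k n] k1 by auto
  hence XY': "k * X = n * Y + d" using d_def by (simp add: gcd.commute)
  have "x = x ^ (2 ^ (k * X))" using kx by simp
  also have "\<dots> = (x ^ (2 ^ (n * Y))) ^ (2 ^ d)" unfolding XY' by (simp add: pow2_comp)
  also have "\<dots> = x ^ (2^d)" using frob by simp
  finally show "x \<in> F" using F_iff by simp
next
  fix x assume "x \<in> F"
  thus "x \<in> {x. x ^ (2^k) = x}" using F_pow_dvd ddvdk by simp
qed

abbreviation Tr :: "'a \<Rightarrow> 'a" where "Tr \<equiv> rel_trace d s"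

lemma Tr_add: "Tr (x + y) = Tr x + Tr y"
  unfolding rel_trace_def by (simp add: c2_pow_add[OF two] sum.distrib)

lemma Tr_diff: "Tr (x - y) = Tr x - Tr y"
  unfolding rel_trace_def by (simp add: c2_pow_diff[OF two] sum_subtractf)

lemma Tr_zero: "Tr 0 = 0" unfolding rel_trace_def by (simp add: power_0_left)

lemma Tr_frobd: "Tr (y ^ (2^d)) = Tr y"
proof -
  have "Tr (y ^ (2^d)) - Tr y = (\<Sum>i<s. y ^ (2^(d * Suc i)) - y ^ (2^(d*i)))"
    unfolding rel_trace_def by (simp add: pow2_comp sum_subtractf add.commute)
  also have "\<dots> = y ^ (2^(d*s)) - y" using sum_lessThan_telescope[of "\<lambda>i. y ^ (2^(d*i))" s] by simp
  also have "\<dots> = 0" using frob[of y 1] nds by simp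
  finally show ?thesis by simp
qed

lemma Tr_F: "Tr z \<in> F"
proof -
  have "(Tr z) ^ (2^d) = Tr (z ^ (2^d))"
    unfolding rel_trace_def c2_pow_sum[OF two] by (simp add: pow2_comp add.commute)
  thus ?thesis using Tr_frobd F_iff by simp
qed

lemma Tr_pow: "d dvd j \<Longrightarrow> Tr (z ^ (2^j)) = Tr z"
proof -
  assume "d dvd j"
  have "Tr (z ^ (2^j)) = (Tr z) ^ (2^j)"
    unfolding rel_trace_def c2_pow_sum[OF two] by (simp add: pow2_comp add.commute)
  thus ?thesis using F_pow_dvd[OF Tr_F \<open>d dvd j\<close>] by simp
qed

lemma Tr_scal: "c \<in> F \<Longrightarrow> Tr (c * z) = c * Tr z"
  unfolding rel_trace_def by (simp add: power_mult_distrib F_pow_mult sum_distrib_left)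

lemma Tr_ker: "card {x::'a. Tr x = 0} \<le> card F ^ (s - 1)"
proof -
  have "Tr x = (\<Sum>i\<le>s-1. (\<lambda>_. 1::'a) i * x ^ (2^(d*i)))" for x
    unfolding rel_trace_def using spos by (simp add: lessThan_Suc_atMost[symmetric])
  hence "{x::'a. Tr x = 0} = {x. (\<Sum>i\<le>s-1. (\<lambda>_. 1::'a) i * x ^ (2^(d*i))) = 0}" by simp
  also have "card \<dots> \<le> card {x::'a. x ^ (2^d) = x} ^ (s - 1)"
    by (rule sigma_bound[OF two]) simp
  finally show ?thesis unfolding subfield_fix_def by simp
qed

lemma card_F: "card F = 2 ^ d"
proof (rule antisym)
  define p :: "'a poly" where "p = monom 1 (2^d) - [:0, 1:]"
  have d1: "2^d \<noteq> (1::nat)" using dpos by simp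
  have cp: "coeff p (2^d) = 1" unfolding p_def using d1 by (simp add: coeff_pCons split: nat.split)
  hence p0: "p \<noteq> 0" by auto
  have "degree p \<le> 2^d" unfolding p_def
    by (rule degree_diff_le) (auto simp: degree_monom_le intro: order.trans[OF _ one_le_power])
  moreover have "poly p x = 0 \<longleftrightarrow> x ^ (2^d) = x" for x unfolding p_def by (simp add: poly_monom)
  hence "F = {x. poly p x = 0}" unfolding subfield_fix_def by simp
  ultimately show "card F \<le> 2^d" using card_poly_roots_bound[OF p0] by simp
next
  define g where "g y = y ^ (2^d) - y" for y :: 'a
  have gadd: "g (x + y) = g x + g y" for x y unfolding g_def c2_pow_add[OF two] by simp
  have gker: "{y. g y = 0} = F" unfolding g_def subfield_fix_def by auto
  have "range g \<subseteq> {x. Tr x = 0}" unfolding g_def using Tr_diff Tr_frobd by auto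
  hence "card (range g) \<le> card F ^ (s - 1)" using Tr_ker by (meson card_mono finite order_trans)
  hence "2 ^ n \<le> card F * card F ^ (s - 1)" using hom_card[OF gadd] gker cardU by simp
  also have "\<dots> = card F ^ s" using spos by (simp add: power_eq_if)
  finally have "(2^d) ^ s \<le> card F ^ s" using nds by (simp add: power_mult)
  thus "2^d \<le> card F" using spos power_mono_iff[of "2^d" "card F" s] by simp
qed

lemma Tr_nondeg: "z \<noteq> 0 \<Longrightarrow> \<exists>y. Tr (y * z) \<noteq> 0"
proof -
  assume z: "z \<noteq> 0"
  have "card {x::'a. Tr x = 0} \<le> (2^d) ^ (s - 1)" using Tr_ker card_F by simp
  also have "\<dots> < (2^d) ^ s" using spos dpos one_less_power[of "2::nat" d] by (intro power_strict_increasing) auto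
  also have "\<dots> = card (UNIV::'a set)" using cardU nds by (simp add: power_mult)
  finally have "{x::'a. Tr x = 0} \<noteq> UNIV" by auto
  then obtain w where "Tr w \<noteq> 0" by auto
  hence "Tr ((w / z) * z) \<noteq> 0" using z by simp
  thus ?thesis by blast
qed

end

context ffield
begin

definition M :: "'a \<Rightarrow> 'a \<Rightarrow> 'a \<Rightarrow> 'a" where
  "M \<alpha> \<beta> x = \<alpha> * x^(2^(2*k)) + \<beta> * x^(2^k) + (\<alpha>*x)^(2^(2*k*(n-1))) + (\<beta>*x)^(2^(k*(n-1)))"

lemma swap4: "(a::'b::ab_semigroup_add) + c + b + e = a + b + c + e" by (simp add: ac_simps)

lemma pow_comp_gen: "((y::'b::comm_monoid_mult) * w^(2^a))^(2^b) = y^(2^b) * w^(2^(a+b))"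
  by (simp add: power_mult_distrib pow2_comp)

lemma pow_plus1_expand:
  "((x::'a) + y) ^ (2^j + 1) = x ^ (2^j + 1) + y ^ (2^j + 1) + (x^(2^j) * y + x * y^(2^j))"
proof -
  have "(x + y) ^ (2^j + 1) = (x^(2^j) + y^(2^j)) * (x + y)" by (simp add: c2_pow_add[OF two])
  thus ?thesis by (simp add: algebra_simps)
qed

lemma f_expand:
  fixes \<alpha> \<beta> x y z c :: 'a
  shows "f_ab d s k \<alpha> \<beta> (x + y) = f_ab d s k \<alpha> \<beta> x + f_ab d s k \<alpha> \<beta> y
     + Tr (\<alpha> * (x^(2^(2*k)) * y) + \<alpha> * (x * y^(2^(2*k))) + \<beta> * (x^(2^k) * y) + \<beta> * (x * y^(2^k)))"
proof -
  have "\<alpha> * (x + y) ^ (2 ^ (2 * k) + 1) + \<beta> * (x + y) ^ (2 ^ k + 1)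
     = (\<alpha> * x ^ (2 ^ (2 * k) + 1) + \<beta> * x ^ (2 ^ k + 1)) + (\<alpha> * y ^ (2 ^ (2 * k) + 1) + \<beta> * y ^ (2 ^ k + 1))
       + (\<alpha> * (x^(2^(2*k)) * y) + \<alpha> * (x * y^(2^(2*k))) + \<beta> * (x^(2^k) * y) + \<beta> * (x * y^(2^k)))"
    unfolding pow_plus1_expand by (simp add: algebra_simps)
  thus ?thesis unfolding f_ab_def by (simp add: Tr_add)
qed

lemma Tr_move2:
  fixes \<alpha> \<beta> x y z c :: 'a
  shows "Tr (\<alpha> * (x * y^(2^(2*k)))) = Tr (y * (\<alpha>*x)^(2^(2*k*(n-1))))"
proof -
  have "Tr (y * (\<alpha>*x)^(2^(2*k*(n-1)))) = Tr ((y * (\<alpha>*x)^(2^(2*k*(n-1)))) ^ (2^(2*k)))"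
    using Tr_pow[of "2*k"] ddvdk by simp
  also have "(y * (\<alpha>*x)^(2^(2*k*(n-1)))) ^ (2^(2*k)) = y^(2^(2*k)) * (\<alpha>*x)^(2^(n*(2*k)))"
  proof -
    have "2*k*(n-1) + 2*k = n*(2*k)" using npos by (cases n) (auto simp: algebra_simps)
    thus ?thesis by (simp only: pow_comp_gen)
  qed
  also have "\<dots> = \<alpha> * (x * y^(2^(2*k)))" by (simp only: frob) (simp add: ac_simps)
  finally show ?thesis by simp
qed

lemma Tr_move1:
  fixes \<alpha> \<beta> x y z c :: 'a
  shows "Tr (\<beta> * (x * y^(2^k))) = Tr (y * (\<beta>*x)^(2^(k*(n-1))))"
proof -
  have "Tr (y * (\<beta>*x)^(2^(k*(n-1)))) = Tr ((y * (\<beta>*x)^(2^(k*(n-1)))) ^ (2^k))"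
    using Tr_pow[of k] ddvdk by simp
  also have "(y * (\<beta>*x)^(2^(k*(n-1)))) ^ (2^k) = y^(2^k) * (\<beta>*x)^(2^(n*k))"
  proof -
    have "k*(n-1) + k = n*k" using npos by (cases n) (auto simp: algebra_simps)
    thus ?thesis by (simp only: pow_comp_gen)
  qed
  also have "\<dots> = \<beta> * (x * y^(2^k))" by (simp only: frob) (simp add: ac_simps)
  finally show ?thesis by simp
qed

lemma B_M:
  fixes \<alpha> \<beta> x y z c :: 'a
  shows "B_ab d s k \<alpha> \<beta> x y = Tr (y * M \<alpha> \<beta> x)"
proof -
  have "B_ab d s k \<alpha> \<beta> x y = Tr (\<alpha> * (x^(2^(2*k)) * y) + \<alpha> * (x * y^(2^(2*k))) + \<beta> * (x^(2^k) * y) + \<beta> * (x * y^(2^k)))"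
    unfolding B_ab_def f_expand by simp
  also have "\<dots> = Tr (\<alpha> * (x^(2^(2*k)) * y)) + Tr (\<alpha> * (x * y^(2^(2*k)))) + Tr (\<beta> * (x^(2^k) * y)) + Tr (\<beta> * (x * y^(2^k)))"
    by (simp add: Tr_add)
  also have "\<dots> = Tr (y * (\<alpha> * x^(2^(2*k)))) + Tr (y * (\<alpha>*x)^(2^(2*k*(n-1)))) + Tr (y * (\<beta> * x^(2^k))) + Tr (y * (\<beta>*x)^(2^(k*(n-1))))"
  proof -
    have e3: "Tr (\<alpha> * (x^(2^(2*k)) * y)) = Tr (y * (\<alpha> * x^(2^(2*k))))" by (simp add: mult.commute mult.left_commute)
    have e4: "Tr (\<beta> * (x^(2^k) * y)) = Tr (y * (\<beta> * x^(2^k)))" by (simp add: mult.commute mult.left_commute)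
    show ?thesis by (simp only: e3 e4 Tr_move1 Tr_move2)
  qed
  also have "\<dots> = Tr (y * M \<alpha> \<beta> x)"
  proof -
    have "Tr (y * M \<alpha> \<beta> x) = Tr (y * (\<alpha> * x^(2^(2*k)))) + Tr (y * (\<beta> * x^(2^k)))
       + Tr (y * (\<alpha>*x)^(2^(2*k*(n-1)))) + Tr (y * (\<beta>*x)^(2^(k*(n-1))))"
      unfolding M_def by (simp only: distrib_left Tr_add)
    thus ?thesis by (simp only: swap4)
  qed
  finally show ?thesis .
qed

lemma B_sym:
  fixes \<alpha> \<beta> x y z c :: 'a
  shows "B_ab d s k \<alpha> \<beta> x y = B_ab d s k \<alpha> \<beta> y x"
  unfolding B_ab_def add.commute[of x y] by (simp only: diff_diff_eq add.commute)

lemma f_zero: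
  fixes \<alpha> \<beta> x y z c :: 'a
  shows "f_ab d s k \<alpha> \<beta> 0 = 0"
  unfolding f_ab_def by (simp add: power_0_left Tr_zero)

lemma B_alt:
  fixes \<alpha> \<beta> x y z c :: 'a
  shows "B_ab d s k \<alpha> \<beta> x x = 0"
proof -
  have xx: "x + x = 0" by (rule c2_add_self[OF two])
  have "0 - f_ab d s k \<alpha> \<beta> x - f_ab d s k \<alpha> \<beta> x = - (f_ab d s k \<alpha> \<beta> x + f_ab d s k \<alpha> \<beta> x)"
    by (simp only: diff_conv_add_uminus minus_add add_0_left)
  also have "\<dots> = 0" by (simp only: c2_add_self[OF two] neg_0_equal_iff_equal) simp
  finally show ?thesis unfolding B_ab_def xx f_zero .
qed

lemma B_add:
  fixes \<alpha> \<beta> x y z c :: 'a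
  shows "B_ab d s k \<alpha> \<beta> x (y + z) = B_ab d s k \<alpha> \<beta> x y + B_ab d s k \<alpha> \<beta> x z"
  unfolding B_M by (simp add: distrib_right Tr_add)

lemma B_scal:
  fixes \<alpha> \<beta> x y z c :: 'a
  shows "c \<in> F \<Longrightarrow> B_ab d s k \<alpha> \<beta> x (c * y) = c * B_ab d s k \<alpha> \<beta> x y"
  unfolding B_M by (simp add: Tr_scal mult.assoc)

lemma B_inF:
  fixes \<alpha> \<beta> x y z c :: 'a
  shows "B_ab d s k \<alpha> \<beta> x y \<in> F"
  unfolding B_M by (rule Tr_F)

lemma radical_M:
  fixes \<alpha> \<beta> x y z c :: 'a
  shows "radical_ab d s k \<alpha> \<beta> = {x. M \<alpha> \<beta> x = 0}"
proof -
  have "(\<forall>y. Tr (y * M \<alpha> \<beta> x) = 0) \<longleftrightarrow> M \<alpha> \<beta> x = 0" for x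
  proof
    assume h: "\<forall>y. Tr (y * M \<alpha> \<beta> x) = 0"
    show "M \<alpha> \<beta> x = 0"
    proof (rule ccontr)
      assume "M \<alpha> \<beta> x \<noteq> 0"
      then obtain y where "Tr (y * M \<alpha> \<beta> x) \<noteq> 0" using Tr_nondeg by blast
      thus False using h by blast
    qed
  qed (simp add: Tr_zero)
  thus ?thesis unfolding radical_ab_def B_M by (simp only:)
qed

end

context ffield
begin

lemma M_add: fixes \<alpha> \<beta> \<alpha>' \<beta>' x :: 'a
  shows "M (\<alpha> + \<alpha>') (\<beta> + \<beta>') x = M \<alpha> \<beta> x + M \<alpha>' \<beta>' x"
proof -
  have "M (\<alpha> + \<alpha>') (\<beta> + \<beta>') x = (\<alpha> * x^(2^(2*k)) + \<alpha>' * x^(2^(2*k))) + (\<beta> * x^(2^k) + \<beta>' * x^(2^k))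
     + ((\<alpha>*x)^(2^(2*k*(n-1))) + (\<alpha>'*x)^(2^(2*k*(n-1)))) + ((\<beta>*x)^(2^(k*(n-1))) + (\<beta>'*x)^(2^(k*(n-1))))"
    unfolding M_def by (simp only: distrib_right c2_pow_add[OF two])
  thus ?thesis unfolding M_def by (simp only: ac_simps)
qed

lemma M_pow: fixes \<alpha> \<beta> x :: 'a
  shows "(M \<alpha> \<beta> x)^(2^(2*k)) = \<alpha> * x + \<beta>^(2^k) * x^(2^k) + \<beta>^(2^(2*k)) * x^(2^(k*3)) + \<alpha>^(2^(2*k)) * x^(2^(k*4))"
proof -
  have t1: "(\<alpha> * x^(2^(2*k)))^(2^(2*k)) = \<alpha>^(2^(2*k)) * x^(2^(k*4))"
    by (simp add: power_mult_distrib pow2_comp) (simp add: algebra_simps)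
  have t2: "(\<beta> * x^(2^k))^(2^(2*k)) = \<beta>^(2^(2*k)) * x^(2^(k*3))"
    by (simp add: power_mult_distrib pow2_comp) (simp add: algebra_simps)
  have t3: "((\<alpha>*x)^(2^(2*k*(n-1))))^(2^(2*k)) = \<alpha> * x"
  proof -
    have "2*k*(n-1) + 2*k = n*(2*k)" using npos by (cases n) (auto simp: algebra_simps)
    hence "((\<alpha>*x)^(2^(2*k*(n-1))))^(2^(2*k)) = (\<alpha>*x)^(2^(n*(2*k)))" by (simp only: pow2_comp)
    thus ?thesis by (simp only: frob)
  qed
  have t4: "((\<beta>*x)^(2^(k*(n-1))))^(2^(2*k)) = \<beta>^(2^k) * x^(2^k)"
  proof -
    have "k*(n-1) + 2*k = n*k + k" using npos by (cases n) (auto simp: algebra_simps)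
    hence "((\<beta>*x)^(2^(k*(n-1))))^(2^(2*k)) = ((\<beta>*x)^(2^(n*k)))^(2^k)" by (simp only: pow2_comp)
    also have "\<dots> = (\<beta>*x)^(2^k)" by (simp only: frob)
    finally show ?thesis by (simp add: power_mult_distrib)
  qed
  have "(M \<alpha> \<beta> x)^(2^(2*k)) = \<alpha>^(2^(2*k)) * x^(2^(k*4)) + \<beta>^(2^(2*k)) * x^(2^(k*3)) + \<alpha> * x + \<beta>^(2^k) * x^(2^k)"
    unfolding M_def c2_pow_add[OF two] t1 t2 t3 t4 ..
  thus ?thesis by (simp only: ac_simps)
qed

lemma ker_M_bound: fixes \<alpha> \<beta> :: 'a
  assumes ab: "(\<alpha>, \<beta>) \<noteq> (0, 0)"
  shows "card {x. M \<alpha> \<beta> x = 0} \<le> card F ^ 4"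
proof -
  have eq: "{x. M \<alpha> \<beta> x = 0} = {x. (M \<alpha> \<beta> x)^(2^(2*k)) = 0}" by simp
  have Q1: "1 \<le> card F"
  proof -
    have "0 \<in> F" unfolding subfield_fix_def by (simp add: power_0_left)
    hence "F \<noteq> {}" by blast
    thus ?thesis by (simp add: Suc_leI card_gt_0_iff)
  qed
  show ?thesis
  proof (cases "\<alpha> = 0")
    case False
    define a where "a i = (if i = 0 then \<alpha> else if i = 1 then \<beta>^(2^k) else if i = 3 then \<beta>^(2^(2*k))
        else if i = 4 then \<alpha>^(2^(2*k)) else 0)" for i :: nat
    have "(\<Sum>i\<le>4. a i * x^(2^(k*i))) = (M \<alpha> \<beta> x)^(2^(2*k))" for x
      unfolding M_pow a_def by (simp add: eval_nat_numeral ac_simps)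
    hence "{x. (M \<alpha> \<beta> x)^(2^(2*k)) = 0} = {x. (\<Sum>i\<le>4. a i * x^(2^(k*i))) = 0}" by simp
    also have "card \<dots> \<le> card {x::'a. x^(2^k) = x} ^ 4"
      by (rule sigma_bound[OF two]) (simp add: a_def False)
    finally show ?thesis unfolding eq Fix_k .
  next
    case True
    hence b: "\<beta> \<noteq> 0" using ab by simp
    define a where "a i = (if i = 1 then \<beta>^(2^k) else if i = 3 then \<beta>^(2^(2*k)) else 0)" for i :: nat
    have "(\<Sum>i\<le>3. a i * x^(2^(k*i))) = (M \<alpha> \<beta> x)^(2^(2*k))" for x
      unfolding M_pow a_def using True by (simp add: eval_nat_numeral ac_simps power_0_left)
    hence "{x. (M \<alpha> \<beta> x)^(2^(2*k)) = 0} = {x. (\<Sum>i\<le>3. a i * x^(2^(k*i))) = 0}" by simp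
    also have "card \<dots> \<le> card {x::'a. x^(2^k) = x} ^ 3"
      by (rule sigma_bound[OF two]) (simp add: a_def b)
    also have "\<dots> = card F ^ 3" unfolding Fix_k ..
    also have "\<dots> \<le> card F ^ 4" using Q1 by (simp add: power_increasing)
    finally show ?thesis unfolding eq .
  qed
qed

end

context ffield
begin

lemma card_Q: "card (UNIV::'a set) = card F ^ s"
  using cardU card_F nds by (simp add: power_mult)

lemma Q2: "2 \<le> card F" using card_F dpos
  by (metis One_nat_def Suc_1 Suc_leI less_exp dual_order.strict_trans2 one_le_power one_less_numeral_iff semiring_norm(76) le_add2 power_one_right power_increasing)

lemma radical_struct: fixes \<alpha> \<beta> :: 'a
  assumes ab: "(\<alpha>, \<beta>) \<noteq> (0, 0)" and os: "odd s"
  shows "\<exists>m. card (radical_ab d s k \<alpha> \<beta>) = card F ^ m \<and> (m = 1 \<or> m = 3)"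
proof -
  let ?B = "B_ab d s k \<alpha> \<beta>"
  let ?R = "radical_ab d s k \<alpha> \<beta>"
  have B0: "?B x 0 = 0" for x
  proof -
    have "?B x 0 + ?B x 0 = ?B x 0 + 0" using B_add[of \<alpha> \<beta> x 0 0] by simp
    thus ?thesis by (simp only: add_left_cancel)
  qed
  have sub: "fsubspace F ?R" unfolding fsubspace_def radical_ab_def
  proof (intro conjI ballI)
    show "0 \<in> {x. \<forall>y. ?B x y = 0}" using B0 B_sym by simp
  next
    fix x y assume "x \<in> {x. \<forall>y. ?B x y = 0}" "y \<in> {x. \<forall>y. ?B x y = 0}"
    thus "x + y \<in> {x. \<forall>y. ?B x y = 0}" using B_sym B_add by (simp add: B_sym[of _ _ "x + y"] B_add)
  next
    fix c x assume "c \<in> F" "x \<in> {x. \<forall>y. ?B x y = 0}"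
    thus "c * x \<in> {x. \<forall>y. ?B x y = 0}" using B_sym B_scal by (simp add: B_sym[of _ _ "c * x"] B_scal)
  qed
  obtain m where m: "card ?R = card F ^ m" using space_card_pow[OF subfield_F sub] by blast
  have "fsubspace F (UNIV::'a set)" unfolding fsubspace_def by simp
  from alt_parity[OF subfield_F B_sym B_alt B_add B_scal B_inF this]
  obtain t where "card (UNIV::'a set) = card {x\<in>UNIV. \<forall>y\<in>UNIV. ?B x y = 0} * card F ^ (2*t)" by blast
  moreover have "{x\<in>UNIV. \<forall>y\<in>UNIV. ?B x y = 0} = ?R" unfolding radical_ab_def by simp
  ultimately have "card F ^ s = card ?R * card F ^ (2*t)" unfolding card_Q by simp
  hence "card F ^ s = card F ^ m * card F ^ (2*t)" using m by simp
  hence "card F ^ s = card F ^ (m + 2*t)" by (simp add: power_add)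
  hence sm: "s = m + 2*t" using Q2 by (simp add: power_inject_exp)
  have "card F ^ m \<le> card F ^ 4" using ker_M_bound[OF ab] m radical_M by simp
  hence "m \<le> 4" using Q2 by (simp add: power_le_imp_le_exp)
  moreover have "odd m" using os sm by simp
  ultimately have "m = 1 \<or> m = 3" by presburger
  thus ?thesis using m by blast
qed

lemma Phi_count: fixes x :: 'a
  assumes x: "x \<noteq> 0"
  shows "card {p::'a \<times> 'a. M (fst p) (snd p) x = 0} = card F ^ (s + 1)"
proof -
  define \<Phi> where "\<Phi> p = M (fst p) (snd p) x" for p :: "'a \<times> 'a"
  have Padd: "\<Phi> (p + q) = \<Phi> p + \<Phi> q" for p q unfolding \<Phi>_def by (simp add: M_add)
  define g where "g b = \<Phi> (0, b)" for b
  have gadd: "g (a + b) = g a + g b" for a b unfolding g_def using Padd[of "(0,a)" "(0,b)"] by simp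
  have rg: "range g \<subseteq> range \<Phi>" unfolding g_def by auto
  have rP: "range \<Phi> \<subseteq> {z. Tr (x * z) = 0}"
  proof
    fix z assume "z \<in> range \<Phi>"
    then obtain p where "z = \<Phi> p" by auto
    thus "z \<in> {z. Tr (x * z) = 0}" unfolding \<Phi>_def using B_M[of "fst p" "snd p" x x] B_alt by simp
  qed
  have "{z. Tr (x * z) = 0} = (\<lambda>w. w / x) ` {w. Tr w = 0}"
  proof (intro equalityI subsetI)
    fix z assume "z \<in> {z. Tr (x * z) = 0}"
    thus "z \<in> (\<lambda>w. w / x) ` {w. Tr w = 0}" using x by (auto intro!: image_eqI[where x="x * z"])
  qed (use x in auto)
  hence "card {z. Tr (x * z) = 0} \<le> card {w::'a. Tr w = 0}" by (simp add: card_image_le)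
  hence up: "card (range \<Phi>) \<le> card F ^ (s - 1)"
    using Tr_ker card_mono[OF _ rP] by (meson finite order_trans)
  have kg: "card {b. g b = 0} \<le> card F"
  proof -
    define a where "a i = (if i = 0 then x else x^(2^(2*k)))" for i :: nat
    have "(g b)^(2^k) = (\<Sum>i\<le>1. a i * b^(2^(k*i)))" for b
    proof -
      have "k*(n-1) + k = n*k" using npos by (cases n) (auto simp: algebra_simps)
      hence e1: "((b*x)^(2^(k*(n-1))))^(2^k) = b * x" by (simp only: pow2_comp frob)
      have e2: "(b * x^(2^k))^(2^k) = b^(2^k) * x^(2^(2*k))"
        by (simp add: power_mult_distrib pow2_comp mult_2)
      have "g b = b * x^(2^k) + (b*x)^(2^(k*(n-1)))" unfolding g_def \<Phi>_def M_def by (simp add: power_0_left)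
      hence "(g b)^(2^k) = b^(2^k) * x^(2^(2*k)) + b * x" by (simp only: c2_pow_add[OF two] e1 e2)
      thus ?thesis unfolding a_def by (simp add: ac_simps)
    qed
    hence "{b. g b = 0} = {b. (\<Sum>i\<le>1. a i * b^(2^(k*i))) = 0}" by (metis (mono_tags) power_eq_0_iff zero_less_numeral zero_less_power)
    also have "card \<dots> \<le> card {x::'a. x^(2^k) = x} ^ 1" by (rule sigma_bound[OF two]) (simp add: a_def x)
    finally show ?thesis unfolding Fix_k by simp
  qed
  have "card F ^ s = card {b. g b = 0} * card (range g)" using hom_card[OF gadd] card_Q by simp
  also have "\<dots> \<le> card F * card (range \<Phi>)" using kg card_mono[OF _ rg] by (simp add: mult_mono)
  finally have "card F * card F ^ (s - 1) \<le> card F * card (range \<Phi>)" using spos by (cases s) auto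
  hence "card F ^ (s - 1) \<le> card (range \<Phi>)" using Q2 by simp
  hence rPeq: "card (range \<Phi>) = card F ^ (s - 1)" using up by simp
  have "card (UNIV :: ('a \<times> 'a) set) = card F ^ (2 * s)"
    unfolding UNIV_Times_UNIV[symmetric] card_cartesian_product card_Q by (simp add: power_add mult_2)
  hence "card F ^ (2 * s) = card {p. \<Phi> p = 0} * card F ^ (s - 1)" using hom_card[OF Padd] rPeq by simp
  moreover have "card F ^ (2 * s) = card F ^ (s + 1) * card F ^ (s - 1)"
  proof -
    have "2 * s = (s + 1) + (s - 1)" using spos by simp
    thus ?thesis by (simp only: power_add[symmetric])
  qed
  moreover have "card F ^ (s - 1) \<noteq> 0" using Q2 by (intro power_not_zero) linarith
  ultimately have "card {p. \<Phi> p = 0} = card F ^ (s + 1)" by (metis mult_right_cancel)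
  thus ?thesis unfolding \<Phi>_def .
qed

end

lemma fdim_eq: "1 < card K \<Longrightarrow> card W = card K ^ m \<Longrightarrow> fdim K W = m"
  unfolding fdim_def by (rule the_equality) (auto simp: power_inject_exp)

lemma arith_n3:
  fixes n1 n3 P N X q Y :: real
  assumes r1: "n1 + n3 = P" and r2: "P + 1 = q*Y*(q*Y)" and r3: "N + P = n1 * q + n3 * q^3"
   and r4: "X + 1 = q * Y" and r5: "N + X = X * (q*q*Y)"
  shows "q * (n3 * (q * q - 1) - (Y - 1) * (q * Y - 1)) = 0"
proof -
  have eP: "P = q*Y*(q*Y) - 1" using r2 by simp
  have eX: "X = q*Y - 1" using r4 by simp
  have eN: "N = X * (q*q*Y) - X" using r5 by simp
  have en1: "n1 = P - n3" using r1 by simp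
  have A: "n3 * (q^3 - q) = N + P - P * q" using r3 unfolding en1 by (simp add: algebra_simps)
  have key: "N + P - P * q = q * ((Y - 1) * (q*Y - 1))" unfolding eN eX eP by (simp add: algebra_simps)
  have H: "q * (n3 * (q * q - 1)) = n3 * (q^3 - q)" by (simp add: algebra_simps power3_eq_cube)
  have "q * (n3 * (q * q - 1) - (Y - 1) * (q * Y - 1)) = q * (n3 * (q * q - 1)) - q * ((Y - 1) * (q * Y - 1))"
    by (rule right_diff_distrib)
  thus ?thesis using H A key by linarith
qed

theorem mainTheorem3:
  fixes n k d s :: nat
    and n\<^sub>1 n\<^sub>3 :: nat
  assumes "card (UNIV :: 'a set) = 2 ^ n"
    and "0 < n" and "1 \<le> k" and "k \<le> n - 1"
    and "3 * k \<noteq> n" and "3 * k \<noteq> 2 * n"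
    and "d = gcd n k" and "s = n div d" and "odd s"
    and "n\<^sub>1 = card {(\<alpha>::'a::{finite,field}, \<beta>::'a). (\<alpha>, \<beta>) \<noteq> (0, 0) \<and> rank_ab d s k \<alpha> \<beta> = s - 1}"
    and "n\<^sub>3 = card {(\<alpha>::'a::{finite,field}, \<beta>::'a). (\<alpha>, \<beta>) \<noteq> (0, 0) \<and> rank_ab d s k \<alpha> \<beta> = s - 3}"
  shows "n\<^sub>1 + n\<^sub>3 = 2 ^ (2 * n) - 1
    \<and> real n\<^sub>1 = (2 ^ n - 1) * (2 ^ (n + 2 * d) - 2 ^ n - 2 ^ (n - d) + 2 ^ (2 * d)) / (2 ^ (2 * d) - 1)
    \<and> real n\<^sub>3 = (2 ^ (n - d) - 1) * (2 ^ n - 1) / (2 ^ (2 * d) - 1)"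
proof -
  note cardU = assms(1) and npos = assms(2) and k1 = assms(3) and kn1 = assms(4)
  note k3 = assms(5) and k32 = assms(6) and d_def = assms(7) and s_def = assms(8) and os = assms(9)
  have kn: "k < n" using kn1 npos by simp
  interpret ff: ffield n k d s "0::'a" by unfold_locales (use cardU npos k1 kn d_def s_def in auto)
  define Q where "Q = card ff.F"
  have Q2: "2 \<le> Q" unfolding Q_def by (rule ff.Q2)
  have QF: "Q = 2 ^ d" unfolding Q_def by (rule ff.card_F)
  have s5: "5 \<le> s"
  proof -
    have dk: "d dvd k" and nds: "n = d * s" and dpos: "0 < d" using ff.ddvdk ff.nds ff.dpos by auto
    obtain j where j: "k = d * j" using dk by blast
    have "j < s" using kn nds j dpos by (metis mult_less_cancel1)
    moreover have "0 < j" using k1 j by (cases j) auto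
    ultimately have "s \<noteq> 1" by simp
    moreover have "s \<noteq> 3"
    proof
      assume "s = 3"
      hence "j = 1 \<or> j = 2" using \<open>j < s\<close> \<open>0 < j\<close> by auto
      thus False using k3 k32 nds j \<open>s = 3\<close> by auto
    qed
    moreover have "s \<noteq> 0" using ff.spos by simp
    ultimately show ?thesis using os by presburger
  qed
  define P where "P = {p::'a \<times> 'a. p \<noteq> (0, 0)}"
  define c where "c p = card (radical_ab d s k (fst p) (snd p))" for p :: "'a \<times> 'a"
  have cP: "p \<in> P \<Longrightarrow> (c p = Q \<and> rank_ab d s k (fst p) (snd p) = s - 1) \<or>
                          (c p = Q ^ 3 \<and> rank_ab d s k (fst p) (snd p) = s - 3)" for p
  proof -
    assume "p \<in> P"
    hence "(fst p, snd p) \<noteq> (0, 0)" unfolding P_def by simp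
    from ff.radical_struct[OF this os] obtain m where
      m: "card (radical_ab d s k (fst p) (snd p)) = card ff.F ^ m" "m = 1 \<or> m = 3" by blast
    have "fdim ff.F (radical_ab d s k (fst p) (snd p)) = m" using Q2 m(1) unfolding Q_def by (intro fdim_eq) auto
    hence "rank_ab d s k (fst p) (snd p) = s - m" unfolding rank_ab_def by simp
    thus ?thesis using m unfolding c_def Q_def by auto
  qed
  define A1 where "A1 = {p \<in> P. c p = Q}"
  define A3 where "A3 = {p \<in> P. c p = Q ^ 3}"
  have QQ3: "Q \<noteq> Q ^ 3"
  proof -
    have "2 * 2 \<le> Q * Q" using Q2 by (intro mult_mono) auto
    hence "Q * 1 < Q * (Q * Q)" using Q2 by (intro mult_strict_left_mono) auto
    thus ?thesis using Q2 by (simp add: power3_eq_cube)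
  qed
  have s13: "s - 1 \<noteq> s - 3" using s5 by simp
  have n1A: "n\<^sub>1 = card A1"
  proof -
    have "{(\<alpha>::'a, \<beta>::'a). (\<alpha>, \<beta>) \<noteq> (0, 0) \<and> rank_ab d s k \<alpha> \<beta> = s - 1} = A1"
    proof (intro equalityI subsetI)
      fix p assume "p \<in> {(\<alpha>::'a, \<beta>::'a). (\<alpha>, \<beta>) \<noteq> (0, 0) \<and> rank_ab d s k \<alpha> \<beta> = s - 1}"
      hence pP: "p \<in> P" and r: "rank_ab d s k (fst p) (snd p) = s - 1" unfolding P_def by auto
      thus "p \<in> A1" using cP[OF pP] s13 unfolding A1_def by auto
    next
      fix p assume "p \<in> A1"
      hence pP: "p \<in> P" and "c p = Q" unfolding A1_def by auto
      hence "rank_ab d s k (fst p) (snd p) = s - 1" using cP[OF pP] QQ3 by auto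
      thus "p \<in> {(\<alpha>::'a, \<beta>::'a). (\<alpha>, \<beta>) \<noteq> (0, 0) \<and> rank_ab d s k \<alpha> \<beta> = s - 1}"
        using pP unfolding P_def by auto
    qed
    thus ?thesis using assms(10) by simp
  qed
  have n3A: "n\<^sub>3 = card A3"
  proof -
    have "{(\<alpha>::'a, \<beta>::'a). (\<alpha>, \<beta>) \<noteq> (0, 0) \<and> rank_ab d s k \<alpha> \<beta> = s - 3} = A3"
    proof (intro equalityI subsetI)
      fix p assume "p \<in> {(\<alpha>::'a, \<beta>::'a). (\<alpha>, \<beta>) \<noteq> (0, 0) \<and> rank_ab d s k \<alpha> \<beta> = s - 3}"
      hence pP: "p \<in> P" and r: "rank_ab d s k (fst p) (snd p) = s - 3" unfolding P_def by auto
      thus "p \<in> A3" using cP[OF pP] s13 unfolding A3_def by auto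
    next
      fix p assume "p \<in> A3"
      hence pP: "p \<in> P" and "c p = Q ^ 3" unfolding A3_def by auto
      hence "rank_ab d s k (fst p) (snd p) = s - 3" using cP[OF pP] QQ3 by auto
      thus "p \<in> {(\<alpha>::'a, \<beta>::'a). (\<alpha>, \<beta>) \<noteq> (0, 0) \<and> rank_ab d s k \<alpha> \<beta> = s - 3}"
        using pP unfolding P_def by auto
    qed
    thus ?thesis using assms(11) by simp
  qed
  have PA: "P = A1 \<union> A3" using cP unfolding A1_def A3_def by auto
  have dA: "A1 \<inter> A3 = {}" using QQ3 unfolding A1_def A3_def by auto
  have E1: "n\<^sub>1 + n\<^sub>3 = card P" unfolding n1A n3A PA by (rule card_Un_disjoint[symmetric]) (use dA in auto)
  have cPa: "card P + 1 = Q ^ (2 * s)"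
  proof -
    have "card (UNIV :: ('a \<times> 'a) set) = Q ^ (2 * s)"
      unfolding UNIV_Times_UNIV[symmetric] card_cartesian_product ff.card_Q Q_def by (simp add: power_add mult_2)
    moreover have "UNIV = insert (0, 0) P" unfolding P_def by auto
    moreover have "(0,0) \<notin> P" unfolding P_def by auto
    ultimately show ?thesis by (metis card_insert_disjoint finite Suc_eq_plus1)
  qed
  \<comment> \<open>double counting\<close>
  define X where "X = {x::'a. x \<noteq> 0}"
  have cX: "card X + 1 = Q ^ s"
  proof -
    have "UNIV = insert 0 X" unfolding X_def by auto
    moreover have "0 \<notin> X" unfolding X_def by auto
    ultimately show ?thesis using ff.card_Q unfolding Q_def by (metis card_insert_disjoint finite Suc_eq_plus1)
  qed
  define S where "S = Sigma P (\<lambda>p. {x. x \<noteq> 0 \<and> ff.M (fst p) (snd p) x = 0})"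
  define S' where "S' = Sigma X (\<lambda>x. {p. p \<noteq> (0,0) \<and> ff.M (fst p) (snd p) x = 0})"
  have M00: "ff.M 0 0 x = 0" for x unfolding ff.M_def by (simp add: power_0_left)
  have Mx0: "ff.M a b 0 = 0" for a b unfolding ff.M_def by (simp add: power_0_left)
  have "card S = (\<Sum>p\<in>P. card {x. x \<noteq> 0 \<and> ff.M (fst p) (snd p) x = 0})"
    unfolding S_def by (rule card_SigmaI) auto
  moreover have h1: "card {x. x \<noteq> 0 \<and> ff.M (fst p) (snd p) x = 0} + 1 = c p" for p
  proof -
    have "radical_ab d s k (fst p) (snd p) = insert 0 {x. x \<noteq> 0 \<and> ff.M (fst p) (snd p) x = 0}"
      unfolding ff.radical_M using Mx0 by auto
    thus ?thesis unfolding c_def by (simp add: card_insert_disjoint)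
  qed
  ultimately have NS: "card S + card P = (\<Sum>p\<in>P. c p)"
  proof -
    assume cs: "card S = (\<Sum>p\<in>P. card {x. x \<noteq> 0 \<and> ff.M (fst p) (snd p) x = 0})"
    have "(\<Sum>p\<in>P. c p) = (\<Sum>p\<in>P. card {x. x \<noteq> 0 \<and> ff.M (fst p) (snd p) x = 0} + 1)"
      by (simp only: h1)
    also have "\<dots> = card S + card P" unfolding cs by (simp only: sum.distrib) simp
    finally show ?thesis by simp
  qed
  have sumc: "(\<Sum>p\<in>P. c p) = card A1 * Q + card A3 * Q ^ 3"
  proof -
    have "(\<Sum>p\<in>P. c p) = (\<Sum>p\<in>A1. c p) + (\<Sum>p\<in>A3. c p)" unfolding PA by (rule sum.union_disjoint) (use dA in auto)
    also have "(\<Sum>p\<in>A1. c p) = card A1 * Q" unfolding A1_def by simp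
    also have "(\<Sum>p\<in>A3. c p) = card A3 * Q ^ 3" unfolding A3_def by simp
    finally show ?thesis .
  qed
  have "card S' = (\<Sum>x\<in>X. card {p. p \<noteq> (0,0) \<and> ff.M (fst p) (snd p) x = 0})"
    unfolding S'_def by (rule card_SigmaI) auto
  moreover have h2: "card {p. p \<noteq> (0,0) \<and> ff.M (fst p) (snd p) x = 0} + 1 = Q ^ (s + 1)" if "x \<in> X" for x
  proof -
    have "x \<noteq> 0" using that unfolding X_def by simp
    from ff.Phi_count[OF this]
    have "card {p::'a\<times>'a. ff.M (fst p) (snd p) x = 0} = Q ^ (s+1)" unfolding Q_def .
    moreover have "{p::'a\<times>'a. ff.M (fst p) (snd p) x = 0} = insert (0,0) {p. p \<noteq> (0,0) \<and> ff.M (fst p) (snd p) x = 0}"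
      using M00 by auto
    ultimately show ?thesis by (simp add: card_insert_disjoint)
  qed
  ultimately have NS': "card S' + card X = card X * Q ^ (s + 1)"
  proof -
    assume cs: "card S' = (\<Sum>x\<in>X. card {p. p \<noteq> (0,0) \<and> ff.M (fst p) (snd p) x = 0})"
    have "card X * Q ^ (s + 1) = (\<Sum>x\<in>X. card {p. p \<noteq> (0,0) \<and> ff.M (fst p) (snd p) x = 0} + 1)"
      using h2 by simp
    also have "\<dots> = card S' + card X" unfolding cs by (simp only: sum.distrib) simp
    finally show ?thesis by simp
  qed
  have "S' = prod.swap ` S" unfolding S_def S'_def P_def X_def by auto
  hence "card S' = card S" by (simp add: card_image)
  define N where "N = card S"
  have r1: "real n\<^sub>1 + real n\<^sub>3 = real (card P)" using E1 by (metis of_nat_add)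
  have r2: "real (card P) + 1 = real Q ^ (2 * s)" using cPa by (metis of_nat_1 of_nat_add of_nat_power)
  have r3: "real N + real (card P) = real n\<^sub>1 * real Q + real n\<^sub>3 * real Q ^ 3"
    using NS sumc n1A n3A unfolding N_def by (metis of_nat_add of_nat_mult of_nat_power)
  have r4: "real (card X) + 1 = real Q ^ s" using cX by (metis of_nat_1 of_nat_add of_nat_power)
  have r5: "real N + real (card X) = real (card X) * real Q ^ (s + 1)"
    using NS' \<open>card S' = card S\<close> unfolding N_def by (metis of_nat_add of_nat_mult of_nat_power)
  define q where "q = real Q"
  define Y where "Y = q ^ (s - 1)"
  have q2: "2 \<le> q" using Q2 unfolding q_def by simp
  have qs: "q ^ s = q * Y" unfolding Y_def using s5 by (metis Suc_pred' power_Suc less_le_trans zero_less_numeral)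
  have qs1: "q ^ (s + 1) = q * q * Y" using qs by simp
  have q2s: "q ^ (2 * s) = (q * Y) * (q * Y)" using qs by (simp add: mult_2 power_add)
  have n3eq: "real n\<^sub>3 * (q * q - 1) = (Y - 1) * (q * Y - 1)"
  proof -
    have "q * (real n\<^sub>3 * (q * q - 1) - (Y - 1) * (q * Y - 1)) = 0"
      using r1 r2 r3 r4 r5 unfolding q_def[symmetric] qs qs1 q2s by (rule arith_n3)
    thus ?thesis using q2 by simp
  qed
  have n1eq: "real n\<^sub>1 * (q * q - 1) = (q * Y - 1) * (q * q * q * Y - q * Y - Y + q * q)"
  proof -
    have en1: "real n\<^sub>1 = (q * Y) * (q * Y) - 1 - real n\<^sub>3" using r1 r2 unfolding q_def[symmetric] q2s by simp
    have "real n\<^sub>1 * (q * q - 1) = ((q * Y) * (q * Y) - 1 - real n\<^sub>3) * (q * q - 1)" by (simp only: en1)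
    also have "\<dots> = ((q * Y) * (q * Y) - 1) * (q * q - 1) - real n\<^sub>3 * (q * q - 1)" by (rule left_diff_distrib)
    finally have "real n\<^sub>1 * (q * q - 1) = ((q * Y) * (q * Y) - 1) * (q * q - 1) - real n\<^sub>3 * (q * q - 1)" .
    thus ?thesis unfolding n3eq by (simp add: algebra_simps)
  qed
  have qd: "(2::real) ^ d = q" unfolding q_def QF by simp
  have p1: "(2::real) ^ n = q * Y" using qs ff.nds qd by (simp add: power_mult)
  have p2: "(2::real) ^ (2 * d) = q * q" using qd by (simp add: mult_2 power_add)
  have p3: "(2::real) ^ (n + 2 * d) = q * q * q * Y" using p1 p2 by (simp add: power_add)
  have p4: "(2::real) ^ (n - d) = Y"
  proof -
    have "n - d = d * (s - 1)" using ff.nds by (simp add: diff_mult_distrib2)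
    thus ?thesis unfolding Y_def using qd by (simp add: power_mult)
  qed
  have den: "q * q - 1 \<noteq> 0"
  proof -
    have "2 * 2 \<le> q * q" using q2 by (intro mult_mono) auto
    thus ?thesis by simp
  qed
  have part1: "n\<^sub>1 + n\<^sub>3 = 2 ^ (2 * n) - 1"
  proof -
    have "(2::nat) ^ (2 * n) = Q ^ (2 * s)" using QF ff.nds by (simp add: power_mult[symmetric] ac_simps)
    thus ?thesis using E1 cPa by simp
  qed
  show ?thesis
  proof (intro conjI)
    show "n\<^sub>1 + n\<^sub>3 = 2 ^ (2 * n) - 1" by (rule part1)
    show "real n\<^sub>1 = (2 ^ n - 1) * (2 ^ (n + 2 * d) - 2 ^ n - 2 ^ (n - d) + 2 ^ (2 * d)) / (2 ^ (2 * d) - 1)"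
      unfolding p1 p2 p3 p4 using n1eq den by (simp add: field_simps)
    show "real n\<^sub>3 = (2 ^ (n - d) - 1) * (2 ^ n - 1) / (2 ^ (2 * d) - 1)"
      unfolding p1 p2 p4 using n3eq den by (simp add: field_simps)
  qed
qed

end
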